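(* Let $(L,\le,(\sqsubseteq_\alpha)_{\alpha<\kappa})$ be a model of Axioms 1–4. Let $\alpha\le\kappa$ be an ordinal and let $(x_\beta)_{\beta<\alpha}$ be a family of elements of $L$ such that $x_\beta=_\beta x_\gamma$ and $x_\beta\le x_\gamma$ whenever $\beta<\gamma<\alpha$. Let $x=\bigvee_{\beta<\alpha}x_\beta$. Then $x_\beta=_\beta x$ for all $\beta<\alpha$.
   Context: Setting (model of Axioms 1–4). Let $(L,\le)$ be a complete lattice with join operation $\bigvee$ and least element $\perp$. Let $\kappa>0$ be an ordinal, and for each ordinal $\alpha<\kappa$ let $\sqsubseteq_\alpha$ be a preorder on $L$. Derived relation: $x=_\alpha y$ means $x\sqsubseteq_\alpha y$ and $y\sqsubseteq_\alpha x$. Derived set, for $x\in L$ and $\alpha<\kappa$: $(x]_\alpha=\{y\in L:\forall\beta<\alpha,\ x=_\beta y\}$. For a set $X$, $X\sqsubseteq_\alpha y$ means $x\sqsubseteq_\alpha y$ for all $x\in X$. The structure is a model of Axioms 1–4 if: - (A1) for all $\alpha<\beta<\kappa$, $x\sqsubseteq_\beta y$ implies $x=_\alpha y$; - (A2) $\bigcap_{\alpha<\kappa}=_\alpha$ is the identity relation on $L$; - (A3) for every $x\in L$, every $\alpha<\kappa$ and every $X\subseteq(x]_\alpha$ there is $y\in(x]_\alpha$ with $X\sqsubseteq_\alpha y$ such that for all $z\in(x]_\alpha$ with $X\sqsubseteq_\alpha z$ we have $y\sqsubseteq_\alpha z$ and $y\le z$; - (A4) for every nonempty $X\subseteq L$,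 every $\alpha<\kappa$ and every $y\in L$, if $y=_\alpha x$ for all $x\in X$ then $y=_\alpha\bigvee X$. *)

theory Defs
  imports Main
begin

(* Ordinals below kappa are the elements of a well-ordered type 'k (kappa = its
   order type, automatically > 0 since types are nonempty). *)

definition eqa :: "('k \<Rightarrow> 'a \<Rightarrow> 'a \<Rightarrow> bool) \<Rightarrow> 'k \<Rightarrow> 'a \<Rightarrow> 'a \<Rightarrow> bool" where
  "eqa sq a x y \<longleftrightarrow> sq a x y \<and> sq a y x"

definition seg :: "('k::order \<Rightarrow> 'a \<Rightarrow> 'a \<Rightarrow> bool) \<Rightarrow> 'k \<Rightarrow> 'a \<Rightarrow> 'a set" where
  "seg sq a x = {y. \<forall>b<a. eqa sq b x y}"

definition model14 :: "('k::wellorder \<Rightarrow> 'a::complete_lattice \<Rightarrow> 'a \<Rightarrow> bool) \<Rightarrow> bool" where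
  "model14 sq \<longleftrightarrow>
     (\<forall>a. reflp (sq a) \<and> transp (sq a)) \<and>
     (\<forall>a b x y. a < b \<longrightarrow> sq b x y \<longrightarrow> eqa sq a x y) \<and>
     (\<forall>x y. (\<forall>a. eqa sq a x y) \<longrightarrow> x = y) \<and>
     (\<forall>x a X. X \<subseteq> seg sq a x \<longrightarrow>
        (\<exists>y\<in>seg sq a x. (\<forall>w\<in>X. sq a w y) \<and>
           (\<forall>z\<in>seg sq a x. (\<forall>w\<in>X. sq a w z) \<longrightarrow> sq a y z \<and> y \<le> z))) \<and>
     (\<forall>X a y. X \<noteq> {} \<longrightarrow> (\<forall>x\<in>X. eqa sq a y x) \<longrightarrow> eqa sq a y (Sup X))"

end

theory Submission
  imports Defs
begin

theorem mainTheorem9: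
  fixes sq :: "'k::wellorder \<Rightarrow> 'a::complete_lattice \<Rightarrow> 'a \<Rightarrow> bool"
    and A :: "'k set" and xs :: "'k \<Rightarrow> 'a"
  assumes "model14 sq"
    and "\<And>b c. c \<in> A \<Longrightarrow> b < c \<Longrightarrow> b \<in> A"
    and "\<And>b c. b \<in> A \<Longrightarrow> c \<in> A \<Longrightarrow> b < c \<Longrightarrow> eqa sq b (xs b) (xs c) \<and> xs b \<le> xs c"
  shows "\<forall>b\<in>A. eqa sq b (xs b) (SUP c\<in>A. xs c)"
proof
  fix b assume bA: "b \<in> A"
  have M: "(\<forall>a. reflp (sq a) \<and> transp (sq a)) \<and> (\<forall>X a y. X \<noteq> {} \<longrightarrow> (\<forall>x\<in>X. eqa sq a y x) \<longrightarrow> eqa sq a y (Sup X))"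
    using assms(1) unfolding model14_def by (elim conjE) (rule conjI; assumption)
  have refl: "\<And>a. reflp (sq a)" using M by simp
  have A4: "\<And>X a y. X \<noteq> {} \<Longrightarrow> (\<forall>x\<in>X. eqa sq a y x) \<Longrightarrow> eqa sq a y (Sup X)"
    using M by blast
  define X where "X = xs ` {c\<in>A. b \<le> c}"
  have ne: "X \<noteq> {}" using bA unfolding X_def by auto
  have all: "\<forall>x\<in>X. eqa sq b (xs b) x"
  proof
    fix x assume "x \<in> X"
    then obtain c where c: "c \<in> A" "b \<le> c" "x = xs c" unfolding X_def by auto
    show "eqa sq b (xs b) x"
    proof (cases "b = c")
      case True then have "x = xs b" using c by simp
      then show ?thesis using refl[of b] unfolding eqa_def reflp_def by simp
    next
      case False then have "b < c" using c(2) by simp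
      then show ?thesis using c(3) assms(3)[OF bA c(1)] by simp
    qed
  qed
  have e: "eqa sq b (xs b) (Sup X)" using A4[OF ne all] .
  have "Sup X = (SUP c\<in>A. xs c)"
  proof (rule antisym)
    show "Sup X \<le> (SUP c\<in>A. xs c)" unfolding X_def by (rule Sup_subset_mono) auto
    show "(SUP c\<in>A. xs c) \<le> Sup X"
    proof (rule SUP_least)
      fix c assume cA: "c \<in> A"
      show "xs c \<le> Sup X"
      proof (cases "b \<le> c")
        case True then show ?thesis using cA unfolding X_def by (auto intro: Sup_upper)
      next
        case False then have "c < b" by (simp add: not_le)
        then have "xs c \<le> xs b" using assms(3)[OF cA bA] by simp
        also have "xs b \<le> Sup X" using bA unfolding X_def by (auto intro: Sup_upper)
        finally show ?thesis .
      qed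
    qed
  qed
  then show "eqa sq b (xs b) (SUP c\<in>A. xs c)" using e by simp
qed

end
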